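(* Let $A$ be a commutative semiring and $\rho$ a maximal congruence on $A$. If $\rho=\rho_+$, then $\rho$ is a prime congruence.
   Context: Semirings are commutative with $0$ and $1\neq0$, $0a=0$; congruences are equivalence relations compatible with $+,\cdot$. A congruence $\rho\neq A\times A$ is maximal if any congruence $\tau$ with $\rho\subseteq\tau$ is $\rho$ or $A\times A$. Twisted product $(a,b)\ast(c,d)=(ac+bd,ad+bc)$; a congruence $\rho\ne A\times A$ is prime if $(a,b)\ast(c,d)\in\rho$ implies $(a,b)\in\rho$ or $(c,d)\in\rho$. $\rho_+=\{(a,b):(a+c,b+c)\in\rho$ for some $c\in A\}$. *)

theory Defs
  imports Main
begin

definition congruence :: "('a::comm_semiring_1 \<times> 'a) set \<Rightarrow> bool" where
  "congruence \<rho> \<longleftrightarrow> equiv UNIV \<rho> \<and>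
     (\<forall>a b c d. (a, b) \<in> \<rho> \<longrightarrow> (c, d) \<in> \<rho> \<longrightarrow> (a + c, b + d) \<in> \<rho>) \<and>
     (\<forall>a b c d. (a, b) \<in> \<rho> \<longrightarrow> (c, d) \<in> \<rho> \<longrightarrow> (a * c, b * d) \<in> \<rho>)"

definition maximal_congruence :: "('a::comm_semiring_1 \<times> 'a) set \<Rightarrow> bool" where
  "maximal_congruence \<rho> \<longleftrightarrow> congruence \<rho> \<and> \<rho> \<noteq> UNIV \<and>
     (\<forall>\<tau>. congruence \<tau> \<longrightarrow> \<rho> \<subseteq> \<tau> \<longrightarrow> \<tau> = \<rho> \<or> \<tau> = UNIV)"

definition twisted_prod :: "'a::comm_semiring_1 \<times> 'a \<Rightarrow> 'a \<times> 'a \<Rightarrow> 'a \<times> 'a" where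
  "twisted_prod p q = (fst p * fst q + snd p * snd q, fst p * snd q + snd p * fst q)"

definition prime_congruence :: "('a::comm_semiring_1 \<times> 'a) set \<Rightarrow> bool" where
  "prime_congruence \<rho> \<longleftrightarrow> congruence \<rho> \<and> \<rho> \<noteq> UNIV \<and>
     (\<forall>p q. twisted_prod p q \<in> \<rho> \<longrightarrow> p \<in> \<rho> \<or> q \<in> \<rho>)"

definition rho_plus :: "('a::comm_semiring_1 \<times> 'a) set \<Rightarrow> ('a \<times> 'a) set" where
  "rho_plus \<rho> = {(a, b). \<exists>c. (a + c, b + c) \<in> \<rho>}"

end

theory Submission
  imports Defs
begin

theorem proposition2p23:
  fixes \<rho> :: "('a::comm_semiring_1 \<times> 'a) set"
  assumes "maximal_congruence \<rho>"
    and "\<rho> = rho_plus \<rho>"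
  shows "prime_congruence \<rho>"
proof -
  have cg: "congruence \<rho>" and nu: "\<rho> \<noteq> UNIV"
    and mx: "\<And>\<tau>. congruence \<tau> \<Longrightarrow> \<rho> \<subseteq> \<tau> \<Longrightarrow> \<tau> = \<rho> \<or> \<tau> = UNIV"
    using assms(1) unfolding maximal_congruence_def by auto
  have eq: "equiv UNIV \<rho>" using cg unfolding congruence_def by auto
  have refl: "\<And>x. (x,x) \<in> \<rho>" using eq unfolding equiv_def refl_on_def by auto
  have sym: "\<And>x y. (x,y) \<in> \<rho> \<Longrightarrow> (y,x) \<in> \<rho>" using eq unfolding equiv_def sym_def by auto
  have trans: "\<And>x y z. (x,y) \<in> \<rho> \<Longrightarrow> (y,z) \<in> \<rho> \<Longrightarrow> (x,z) \<in> \<rho>"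
    using eq unfolding equiv_def trans_def by blast
  have add: "\<And>a b c d. (a, b) \<in> \<rho> \<Longrightarrow> (c, d) \<in> \<rho> \<Longrightarrow> (a + c, b + d) \<in> \<rho>"
    using cg unfolding congruence_def by blast
  have mul: "\<And>a b c d. (a, b) \<in> \<rho> \<Longrightarrow> (c, d) \<in> \<rho> \<Longrightarrow> (a * c, b * d) \<in> \<rho>"
    using cg unfolding congruence_def by blast
  have canc: "\<And>a b c. (a + c, b + c) \<in> \<rho> \<Longrightarrow> (a, b) \<in> \<rho>"
  proof -
    fix a b c assume "(a + c, b + c) \<in> \<rho>"
    hence "(a,b) \<in> rho_plus \<rho>" unfolding rho_plus_def by blast
    thus "(a,b) \<in> \<rho>" using assms(2) by simp
  qed
  have main: "(c,d) \<in> \<rho>" if h: "(a*c + b*d, a*d + b*c) \<in> \<rho>" "(a,b) \<notin> \<rho>" for a b c d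
  proof -
    define \<tau> where "\<tau> = {(x,y). (x*c + y*d, x*d + y*c) \<in> \<rho>}"
    have c\<tau>: "congruence \<tau>"
      unfolding congruence_def equiv_def refl_on_def sym_def trans_def
    proof (intro conjI allI impI ballI)
      show "\<tau> \<subseteq> UNIV \<times> UNIV" by simp
    next
      fix x show "(x,x) \<in> \<tau>" unfolding \<tau>_def using refl by (simp add: add.commute)
    next
      fix x y assume "(x,y) \<in> \<tau>" thus "(y,x) \<in> \<tau>" unfolding \<tau>_def using sym by (simp add: add.commute)
    next
      fix x y z assume a1: "(x,y) \<in> \<tau>" and a2: "(y,z) \<in> \<tau>"
      have "(x*c + y*d + (y*c + z*d), x*d + y*c + (y*d + z*c)) \<in> \<rho>"
        using add a1 a2 unfolding \<tau>_def by auto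
      hence "((x*c + z*d) + (y*c + y*d), (x*d + z*c) + (y*c + y*d)) \<in> \<rho>"
        by (simp add: ac_simps)
      thus "(x,z) \<in> \<tau>" unfolding \<tau>_def using canc by blast
    next
      fix x y u v assume a1: "(x,y) \<in> \<tau>" and a2: "(u,v) \<in> \<tau>"
      show "(x+u, y+v) \<in> \<tau>" using add[OF a1[unfolded \<tau>_def, simplified] a2[unfolded \<tau>_def, simplified]]
        unfolding \<tau>_def by (simp add: algebra_simps)
    next
      fix x y u v assume a1: "(x,y) \<in> \<tau>" and a2: "(u,v) \<in> \<tau>"
      have b1: "(x*c + y*d, x*d + y*c) \<in> \<rho>" using a1 unfolding \<tau>_def by simp
      have b2: "(u*c + v*d, u*d + v*c) \<in> \<rho>" using a2 unfolding \<tau>_def by simp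
      have "((x*c + y*d)*u + y*(u*c + v*d), (x*d + y*c)*u + y*(u*d + v*c)) \<in> \<rho>"
        using add[OF mul[OF b1 refl] mul[OF refl b2]] .
      hence "((x*u*c + y*v*d) + (y*u*d + y*u*c), (x*u*d + y*v*c) + (y*u*d + y*u*c)) \<in> \<rho>"
        by (simp add: algebra_simps)
      hence "(x*u*c + y*v*d, x*u*d + y*v*c) \<in> \<rho>" using canc by blast
      thus "(x*u, y*v) \<in> \<tau>" unfolding \<tau>_def by (simp add: mult.commute mult.left_commute)
    qed
    have sub: "\<rho> \<subseteq> \<tau>"
    proof
      fix p assume "p \<in> \<rho>"
      then obtain x y where p: "p = (x,y)" "(x,y) \<in> \<rho>" by (cases p) auto
      have "(x*c + y*d, y*c + x*d) \<in> \<rho>" using add[OF mul[OF p(2) refl[of c]] mul[OF sym[OF p(2)] refl[of d]]] .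
      thus "p \<in> \<tau>" unfolding \<tau>_def p by (simp add: add.commute)
    qed
    have "(a,b) \<in> \<tau>" using h(1) unfolding \<tau>_def by simp
    hence "\<tau> = UNIV" using mx[OF c\<tau> sub] h(2) by auto
    hence "(1,0) \<in> \<tau>" by simp
    thus ?thesis unfolding \<tau>_def by simp
  qed
  show ?thesis unfolding prime_congruence_def
  proof (intro conjI allI impI cg nu)
    fix p q :: "'a \<times> 'a" assume "twisted_prod p q \<in> \<rho>"
    thus "p \<in> \<rho> \<or> q \<in> \<rho>" using main[of "fst p" "fst q" "snd p" "snd q"]
      unfolding twisted_prod_def by (cases p, cases q) auto
  qed
qed

end
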